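(* For every $\vec x\in\mathfrak{x}$, let $\vec{\rho_x}(\vec x)=(\rho_x(x_1),\dots,\rho_x(x_{K-1}))\in\mathbb{R}^{K-1}$ and let $\vec v(\vec x)\in\mathbb{R}^{K-1}$ be defined by $\mathrm{W}\vec v(\vec x)=\partial_{\vec x}\mathbf{A}_{\boldsymbol\xi}(\vec x)$. Then the residual $\nu=\vec v(\vec x)-\vec{\rho_x}(\vec x)$ satisfies $$\nu^T\mathrm{W}\nu\le C\kappa^2\alpha(\boldsymbol\xi)M\,\overline\delta(\vec x)^2,$$ with some universal constant $C$.
   Context: $I=[a,b]$, $M>0$. Mesh $\boldsymbol\xi=(\xi_0,\dots,\xi_K)$ with $0=\xi_0<\dots<\xi_K=M$, $\delta_k=\xi_k-\xi_{k-1}$, $\alpha(\boldsymbol\xi)=\max_k\delta_k/\min_k\delta_k$. $\mathfrak{x}=\{\vec x=(x_1,\dots,x_{K-1}):a<x_1<\dots<x_{K-1}<b\}$ with $x_0=a$, $x_K=b$, and $\overline\delta(\vec x)=\max_k(x_k-x_{k-1})$. $\theta_0,\dots,\theta_K$ are the piecewise linear hat functions on $[0,M]$ with $\theta_k(\xi_m)=1$ if $m=k$ and $0$ otherwise; $\mathbf{X}_{\boldsymbol\xi}[\vec x]=\sum_{k=0}^Kx_k\theta_k$. $\mathrm{W}$ is the symmetric tridiagonal $(K-1)\times(K-1)$ matrix with $\mathrm{W}_{k,k}=\frac13(\delta_k+\delta_{k+1})$, $\mathrm{W}_{k,k+1}=\mathrm{W}_{k+1,k}=\frac16\delta_{k+1}$.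 $\rho\in C^\infty(I)$ with $\rho_x(a)=\rho_x(b)=0$, and $\kappa>0$ with $|\rho_x|,|\rho_{xx}|,|\rho_{xxx}|\le\kappa$ on $I$. $\mathbf{A}_{\boldsymbol\xi}(\vec x)=\int_0^M\rho(\mathbf{X}_{\boldsymbol\xi}[\vec x](\xi))\,d\xi$, so $[\partial_{\vec x}\mathbf{A}_{\boldsymbol\xi}(\vec x)]_k=\int_0^M\rho_x(\mathbf{X}_{\boldsymbol\xi}[\vec x])\theta_k\,d\xi$. *)

theory Defs
  imports "HOL-Analysis.Analysis"
begin

definition mesh_delta :: "(nat \<Rightarrow> real) \<Rightarrow> nat \<Rightarrow> real" where
  "mesh_delta xi k = xi k - xi (k - 1)"

definition mesh_ratio :: "nat \<Rightarrow> (nat \<Rightarrow> real) \<Rightarrow> real" where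
  "mesh_ratio K xi = Max (mesh_delta xi ` {1..K}) / Min (mesh_delta xi ` {1..K})"

definition max_gap :: "nat \<Rightarrow> (nat \<Rightarrow> real) \<Rightarrow> real" where
  "max_gap K x = Max ((\<lambda>k. x k - x (k - 1)) ` {1..K})"

definition hat :: "nat \<Rightarrow> (nat \<Rightarrow> real) \<Rightarrow> nat \<Rightarrow> real \<Rightarrow> real" where
  "hat K xi k s =
     (if 0 < k \<and> xi (k - 1) \<le> s \<and> s \<le> xi k then (s - xi (k - 1)) / (xi k - xi (k - 1))
      else if k < K \<and> xi k \<le> s \<and> s \<le> xi (k + 1) then (xi (k + 1) - s) / (xi (k + 1) - xi k)
      else 0)"

definition Xmap :: "nat \<Rightarrow> (nat \<Rightarrow> real) \<Rightarrow> (nat \<Rightarrow> real) \<Rightarrow> real \<Rightarrow> real" where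
  "Xmap K xi x s = (\<Sum>k = 0..K. x k * hat K xi k s)"

definition Afun :: "nat \<Rightarrow> (nat \<Rightarrow> real) \<Rightarrow> (real \<Rightarrow> real) \<Rightarrow> (nat \<Rightarrow> real) \<Rightarrow> real" where
  "Afun K xi rho x = integral {0..xi K} (\<lambda>s. rho (Xmap K xi x s))"

text \<open>Gradient components [d_x A_xi(x)]_k = int_0^M rho_x(X_xi[x]) theta_k, k = 1..K-1,
  with rho_x the derivative of rho.\<close>
definition gradA :: "nat \<Rightarrow> (nat \<Rightarrow> real) \<Rightarrow> (real \<Rightarrow> real) \<Rightarrow> (nat \<Rightarrow> real) \<Rightarrow> nat \<Rightarrow> real" where
  "gradA K xi rho_x x k = integral {0..xi K} (\<lambda>s. rho_x (Xmap K xi x s) * hat K xi k s)"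

definition Wmat :: "(nat \<Rightarrow> real) \<Rightarrow> nat \<Rightarrow> nat \<Rightarrow> real" where
  "Wmat xi i j =
     (if i = j then (mesh_delta xi i + mesh_delta xi (i + 1)) / 3
      else if j = i + 1 then mesh_delta xi (i + 1) / 6
      else if i = j + 1 then mesh_delta xi i / 6
      else 0)"

definition Wquad :: "nat \<Rightarrow> (nat \<Rightarrow> real) \<Rightarrow> (nat \<Rightarrow> real) \<Rightarrow> real" where
  "Wquad K xi nu = (\<Sum>i = 1..K - 1. \<Sum>j = 1..K - 1. nu i * Wmat xi i j * nu j)"

end

theory Submission
  imports Defs
begin


lemma chain_less:
  fixes f :: "nat \<Rightarrow> real"
  assumes "\<forall>k<K. f k < f (Suc k)" "i < j" "j \<le> K"
  shows "f i < f j"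
  using assms(2,3)
proof (induction j)
  case 0 then show ?case by simp
next
  case (Suc j)
  show ?case
  proof (cases "i = j")
    case True then show ?thesis using assms(1) Suc.prems by auto
  next
    case False
    then have "f i < f j" using Suc by auto
    also have "f j < f (Suc j)" using assms(1) Suc.prems by auto
    finally show ?thesis .
  qed
qed

lemma chain_le:
  fixes f :: "nat \<Rightarrow> real"
  assumes "\<forall>k<K. f k < f (Suc k)" "i \<le> j" "j \<le> K"
  shows "f i \<le> f j"
  using chain_less[OF assms(1), of i j] assms by (cases "i = j") auto

lemma poly_int:
  fixes p q A B C E :: real
  assumes "p < q"
  shows "((\<lambda>s. (A*((q-s)/(q-p)) + B*((s-p)/(q-p))) * (C*((q-s)/(q-p)) + E*((s-p)/(q-p))))
     has_integral (q-p)/6*(2*A*C + A*E + B*C + 2*B*E)) {p..q}"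
proof -
  define G where "G t = A*C*t + (A*(E-C)+C*(B-A)) * t^2/2 + (B-A)*(E-C)*t^3/3" for t :: real
  define g where "g t = (A*(1-t)+B*t)*(C*(1-t)+E*t)" for t :: real
  have G: "(G has_real_derivative g t) (at t)" for t
    unfolding G_def g_def
    by (auto intro!: derivative_eq_intros simp: field_simps power2_eq_square power3_eq_cube)
  have L: "((\<lambda>s. (s-p)/(q-p)) has_real_derivative 1/(q-p)) (at s within {p..q})" for s
    using assms by (auto intro!: derivative_eq_intros)
  have d0: "((\<lambda>s. (q-p) * G ((s-p)/(q-p))) has_real_derivative (q-p) * (g ((s-p)/(q-p)) * (1/(q-p)))) (at s within {p..q})" for s
    by (rule DERIV_cmult, rule DERIV_chain2[OF G L])
  have eq: "(q-p) * (g ((s-p)/(q-p)) * (1/(q-p))) = (A*((q-s)/(q-p)) + B*((s-p)/(q-p))) * (C*((q-s)/(q-p)) + E*((s-p)/(q-p)))" for s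
  proof -
    have "(q-s)/(q-p) = 1 - (s-p)/(q-p)" using assms by (simp add: field_simps)
    then show ?thesis using assms by (simp add: g_def)
  qed
  have d: "((\<lambda>s. (q-p) * G ((s-p)/(q-p))) has_vector_derivative ((A*((q-s)/(q-p)) + B*((s-p)/(q-p))) * (C*((q-s)/(q-p)) + E*((s-p)/(q-p))))) (at s within {p..q})" for s
    using d0[of s] unfolding eq has_real_derivative_iff_has_vector_derivative .
  have "(q-p) * G ((q-p)/(q-p)) - (q-p) * G ((p-p)/(q-p)) = (q-p)/6*(2*A*C + A*E + B*C + 2*B*E)"
    using assms by (simp add: G_def field_simps)
  with fundamental_theorem_of_calculus[OF less_imp_le[OF assms] d] show ?thesis by metis
qed



lemma W_row:
  assumes i: "i \<in> {1..K-1}" and d0: "d 0 = 0" and dK: "d K = 0"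
  shows "(\<Sum>j = 1..K - 1. Wmat xi i j * d j) =
    mesh_delta xi i / 6 * d (i-1) + (mesh_delta xi i + mesh_delta xi (i+1)) / 3 * d i
    + mesh_delta xi (i+1) / 6 * d (i+1)"
proof -
  let ?F = "\<lambda>j. Wmat xi i j * d j"
  have "(\<Sum>j = 1..K - 1. ?F j) = (\<Sum>j = 0..K. ?F j)"
  proof (rule sum.mono_neutral_left)
    show "\<forall>j\<in>{0..K} - {1..K - 1}. ?F j = 0"
    proof
      fix j assume "j \<in> {0..K} - {1..K - 1}"
      then have "j = 0 \<or> j = K" by auto
      then show "?F j = 0" using d0 dK by auto
    qed
  qed auto
  also have "\<dots> = (\<Sum>j \<in> {i-1, i, i+1}. ?F j)"
    by (rule sum.mono_neutral_right) (use i in \<open>auto simp: Wmat_def\<close>)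
  also have "\<dots> = ?F (i-1) + ?F i + ?F (i+1)"
  proof -
    have "i - 1 \<noteq> i" "i - 1 \<noteq> i + 1" "i \<noteq> i + 1" using i by auto
    then show ?thesis by (simp add: algebra_simps)
  qed
  also have "\<dots> = mesh_delta xi i / 6 * d (i-1) + (mesh_delta xi i + mesh_delta xi (i+1)) / 3 * d i
    + mesh_delta xi (i+1) / 6 * d (i+1)"
  proof -
    have "i - 1 \<noteq> i" "i - 1 \<noteq> i + 1" "i = (i - 1) + 1" using i by auto
    then show ?thesis by (simp add: Wmat_def)
  qed
  finally show ?thesis .
qed

lemma W_bilin:
  assumes K: "1 \<le> K" and c0: "c 0 = 0" and cK: "c K = 0" and d0: "d 0 = 0" and dK: "d K = 0"
  shows "(\<Sum>i = 1..K - 1. \<Sum>j = 1..K - 1. c i * Wmat xi i j * d j) =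
    (\<Sum>k = 1..K. mesh_delta xi k / 6 * (2 * c (k-1) * d (k-1) + c (k-1) * d k + c k * d (k-1) + 2 * c k * d k))"
proof -
  obtain m where m: "K = Suc m" using K by (cases K) auto
  define P where "P k = mesh_delta xi k / 6 * (2 * c (k-1) * d (k-1) + c (k-1) * d k)" for k
  define Q where "Q k = mesh_delta xi k / 6 * (c k * d (k-1) + 2 * c k * d k)" for k
  have lhs: "(\<Sum>i = 1..K - 1. \<Sum>j = 1..K - 1. c i * Wmat xi i j * d j) =
     (\<Sum>i = 1..m. c i * (mesh_delta xi i / 6 * d (i-1) + (mesh_delta xi i + mesh_delta xi (i+1)) / 3 * d i
    + mesh_delta xi (i+1) / 6 * d (i+1)))"
  proof (rule sum.cong)
    fix i assume "i \<in> {1..m}"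
    then have i: "i \<in> {1..K-1}" using m by auto
    have "(\<Sum>j = 1..K - 1. c i * Wmat xi i j * d j) = c i * (\<Sum>j = 1..K - 1. Wmat xi i j * d j)"
      by (simp add: sum_distrib_left mult.assoc)
    also have "\<dots> = c i * (mesh_delta xi i / 6 * d (i-1) + (mesh_delta xi i + mesh_delta xi (i+1)) / 3 * d i
    + mesh_delta xi (i+1) / 6 * d (i+1))" using W_row[OF i d0 dK] by simp
    finally show "(\<Sum>j = 1..K - 1. c i * Wmat xi i j * d j) = \<dots>" .
  qed (use m in simp)
  have split: "(\<Sum>k = 1..K. mesh_delta xi k / 6 * (2 * c (k-1) * d (k-1) + c (k-1) * d k + c k * d (k-1) + 2 * c k * d k))
     = (\<Sum>k = 1..Suc m. P k) + (\<Sum>k = 1..Suc m. Q k)"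
    unfolding m P_def Q_def sum.distrib[symmetric] by (rule sum.cong) (auto simp: algebra_simps)
  have Qs: "(\<Sum>k = 1..Suc m. Q k) = (\<Sum>k = 1..m. Q k)"
    using cK m by (simp add: Q_def)
  have Ps: "(\<Sum>k = 1..Suc m. P k) = (\<Sum>k = 1..m. P (Suc k))"
  proof -
    have "(\<Sum>k = 1..Suc m. P k) = (\<Sum>k = 0..m. P (Suc k))"
      using sum.shift_bounds_cl_Suc_ivl[of P 0 m] by simp
    also have "\<dots> = P (Suc 0) + (\<Sum>k = 1..m. P (Suc k))"
      by (simp add: sum.atLeast_Suc_atMost)
    also have "P (Suc 0) = 0" using c0 by (simp add: P_def)
    finally show ?thesis by simp
  qed
  show ?thesis
    unfolding lhs split Qs Ps sum.distrib[symmetric]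
    by (rule sum.cong) (auto simp: P_def Q_def algebra_simps)
qed



locale mesh =
  fixes K :: nat and xi :: "nat \<Rightarrow> real"
  assumes K1: "1 \<le> K" and mono: "\<forall>k<K. xi k < xi (Suc k)"
begin

lemma xl: "i < j \<Longrightarrow> j \<le> K \<Longrightarrow> xi i < xi j"
  using chain_less[OF mono] by blast
lemma xle: "i \<le> j \<Longrightarrow> j \<le> K \<Longrightarrow> xi i \<le> xi j"
  using chain_le[OF mono] by blast

lemma hat_k:
  assumes k: "k \<in> {1..K}" and s: "xi (k-1) \<le> s" "s \<le> xi k"
  shows "hat K xi k s = (s - xi (k-1)) / (xi k - xi (k-1))"
  using k s by (simp add: hat_def)

lemma hat_km1:
  assumes k: "k \<in> {1..K}" and s: "xi (k-1) \<le> s" "s \<le> xi k"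
  shows "hat K xi (k-1) s = (xi k - s) / (xi k - xi (k-1))"
proof -
  have lt: "xi (k-1) < xi k" using xl[of "k-1" k] k by auto
  have kk: "k - 1 + 1 = k" "k - 1 < K" using k by auto
  show ?thesis
  proof (cases "0 < k - 1 \<and> xi (k - 1 - 1) \<le> s \<and> s \<le> xi (k - 1)")
    case True
    then have "s = xi (k-1)" using s by auto
    moreover have "xi (k-1-1) < xi (k-1)" using xl[of "k-1-1" "k-1"] True k by auto
    ultimately show ?thesis using True lt by (simp add: hat_def)
  next
    case False
    then show ?thesis using s kk unfolding hat_def by (simp only: if_False) auto
  qed
qed

lemma hat_other:
  assumes k: "k \<in> {1..K}" and s: "xi (k-1) \<le> s" "s \<le> xi k"
    and j: "j \<le> K" "j \<noteq> k" "j \<noteq> k - 1"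
  shows "hat K xi j s = 0"
proof (cases "k < j")
  case True
  have A: "\<not> (xi j \<le> s)" if "j < K"
  proof -
    have "xi k < xi j" using True that by (intro xl) auto
    then show ?thesis using s by auto
  qed
  have B: "s = xi (j-1)" if "xi (j-1) \<le> s"
  proof -
    have "k \<le> j - 1" "j - 1 \<le> K" using True j by auto
    then have "xi k \<le> xi (j-1)" by (rule xle)
    then show ?thesis using s that by auto
  qed
  show ?thesis using A B True unfolding hat_def by auto
next
  case False
  then have jk: "j < k - 1" using j by auto
  have A: "\<not> (s \<le> xi j)"
  proof -
    have "xi j < xi (k-1)" using jk k by (intro xl) auto
    then show ?thesis using s by auto
  qed
  have B: "s = xi (j+1)" if "s \<le> xi (j+1)"
  proof -
    have "j + 1 \<le> k - 1" "k - 1 \<le> K" using jk k by auto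
    then have "xi (j+1) \<le> xi (k-1)" by (rule xle)
    then show ?thesis using s that by auto
  qed
  show ?thesis using A B unfolding hat_def by auto
qed

lemma local_rep:
  assumes k: "k \<in> {1..K}" and s: "xi (k-1) \<le> s" "s \<le> xi k"
  shows "Xmap K xi c s = c (k-1) * ((xi k - s) / (xi k - xi (k-1))) + c k * ((s - xi (k-1)) / (xi k - xi (k-1)))"
proof -
  let ?F = "\<lambda>j. c j * hat K xi j s"
  have "Xmap K xi c s = (\<Sum>j\<in>{k-1, k}. ?F j)"
    unfolding Xmap_def
    by (rule sum.mono_neutral_right) (use k s hat_other[OF k s] in auto)
  also have "\<dots> = ?F (k-1) + ?F k"
  proof -
    have "k - 1 \<noteq> k" using k by auto
    then show ?thesis by simp
  qed
  finally show ?thesis using hat_k[OF k s] hat_km1[OF k s] by simp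
qed

lemma hat_Xmap: "j \<le> K \<Longrightarrow> hat K xi j s = Xmap K xi (\<lambda>i. if i = j then 1 else 0) s"
proof -
  assume j: "j \<le> K"
  have "Xmap K xi (\<lambda>i. if i = j then 1 else 0) s = (\<Sum>k = 0..K. if k = j then hat K xi k s else 0)"
    unfolding Xmap_def by (rule sum.cong) auto
  also have "\<dots> = hat K xi j s" using j by (simp add: sum.delta)
  finally show ?thesis by simp
qed

lemma cover:
  assumes "s \<in> {xi 0..xi K}"
  shows "\<exists>k\<in>{1..K}. xi (k-1) \<le> s \<and> s \<le> xi k"
proof -
  have "n \<le> K \<Longrightarrow> 1 \<le> n \<Longrightarrow> s \<in> {xi 0..xi n} \<Longrightarrow> \<exists>k\<in>{1..n}. xi (k-1) \<le> s \<and> s \<le> xi k" for n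
  proof (induction n)
    case 0 then show ?case by simp
  next
    case (Suc n)
    show ?case
    proof (cases "s \<le> xi n \<and> 1 \<le> n")
      case True
      then obtain k where "k\<in>{1..n}" "xi (k-1) \<le> s \<and> s \<le> xi k" using Suc by auto
      then show ?thesis by auto
    next
      case False
      then have "xi n \<le> s" using Suc.prems by (cases n) auto
      then show ?thesis using Suc.prems by (intro bexI[of _ "Suc n"]) auto
    qed
  qed
  then show ?thesis using assms K1 by blast
qed

lemma pieces_has_integral:
  fixes h :: "real \<Rightarrow> real"
  assumes "\<And>k. k \<in> {1..n} \<Longrightarrow> (h has_integral I k) {xi (k-1)..xi k}" "n \<le> K"
  shows "(h has_integral (\<Sum>k=1..n. I k)) {xi 0..xi n}"
  using assms
proof (induction n)
  case 0 then show ?case using has_integral_refl(2) by simp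
next
  case (Suc n)
  have h1: "(h has_integral (\<Sum>k=1..n. I k)) {xi 0..xi n}" using Suc by auto
  have h2: "(h has_integral I (Suc n)) {xi n..xi (Suc n)}" using Suc.prems(1)[of "Suc n"] by simp
  have l1: "xi 0 \<le> xi n" using Suc.prems by (intro xle) auto
  have l2: "xi n \<le> xi (Suc n)" using Suc.prems by (intro xle) auto
  have "(h has_integral ((\<Sum>k=1..n. I k) + I (Suc n))) {xi 0..xi (Suc n)}"
    by (rule has_integral_combine[OF l1 l2 h1 h2])
  then show ?case by simp
qed

lemma pieces_integrable:
  fixes h :: "real \<Rightarrow> real"
  assumes "\<And>k. k \<in> {1..K} \<Longrightarrow> continuous_on {xi (k-1)..xi k} h"
  shows "h integrable_on {xi 0..xi K}"
proof -
  have "(h has_integral (\<Sum>k=1..K. integral {xi (k-1)..xi k} h)) {xi 0..xi K}"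
  proof (rule pieces_has_integral)
    fix k assume k: "k \<in> {1..K}"
    have "continuous_on {xi (k-1)..xi k} h" using assms k by blast
    then show "(h has_integral integral {xi (k-1)..xi k} h) {xi (k-1)..xi k}"
      by (intro integrable_integral integrable_continuous_real)
  qed simp
  then show ?thesis unfolding integrable_on_def by blast
qed

lemma cont_Xmap:
  assumes "k \<in> {1..K}"
  shows "continuous_on {xi (k-1)..xi k} (Xmap K xi c)"
proof -
  have "continuous_on {xi (k-1)..xi k} (\<lambda>s. c (k-1) * ((xi k - s) / (xi k - xi (k-1))) + c k * ((s - xi (k-1)) / (xi k - xi (k-1))))"
  proof -
    have "xi (k-1) < xi k" using assms by (intro xl) auto
    then show ?thesis by (intro continuous_intros) auto
  qed
  then show ?thesis
    by (rule continuous_on_cong[THEN iffD1, rotated 2]) (use local_rep[OF assms] in auto)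
qed

lemma T_integral:
  "((\<lambda>s. Xmap K xi c s * Xmap K xi d s) has_integral
    (\<Sum>k = 1..K. mesh_delta xi k / 6 * (2 * c (k-1) * d (k-1) + c (k-1) * d k + c k * d (k-1) + 2 * c k * d k)))
    {xi 0..xi K}"
proof (rule pieces_has_integral)
  fix k assume k: "k \<in> {1..K}"
  have lt: "xi (k-1) < xi k" using xl[of "k-1" k] k by auto
  have "((\<lambda>s. (c (k-1) * ((xi k - s) / (xi k - xi (k-1))) + c k * ((s - xi (k-1)) / (xi k - xi (k-1))))
     * (d (k-1) * ((xi k - s) / (xi k - xi (k-1))) + d k * ((s - xi (k-1)) / (xi k - xi (k-1)))))
     has_integral (xi k - xi (k-1))/6*(2*c (k-1)*d (k-1) + c (k-1)*d k + c k*d (k-1) + 2*c k*d k)) {xi (k-1)..xi k}"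
    by (rule poly_int[OF lt])
  then show "((\<lambda>s. Xmap K xi c s * Xmap K xi d s) has_integral
    mesh_delta xi k / 6 * (2 * c (k-1) * d (k-1) + c (k-1) * d k + c k * d (k-1) + 2 * c k * d k)) {xi (k-1)..xi k}"
    unfolding mesh_delta_def
    by (rule has_integral_eq[rotated]) (use local_rep[OF k] in auto)
qed simp

end


lemma interp_bound:
  fixes F :: "real \<Rightarrow> real"
  assumes lip: "\<And>y z. y \<in> {y0..y1} \<Longrightarrow> z \<in> {y0..y1} \<Longrightarrow> \<bar>F y - F z\<bar> \<le> \<kappa> * \<bar>y - z\<bar>"
    and y: "y0 \<le> y1" and t: "0 \<le> t" "t \<le> 1" and k: "0 \<le> \<kappa>"
  shows "\<bar>F ((1-t)*y0 + t*y1) - ((1-t) * F y0 + t * F y1)\<bar> \<le> \<kappa> * (y1 - y0)"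
proof -
  define X where "X = (1-t)*y0 + t*y1"
  have a1: "X - y0 = t * (y1 - y0)" by (simp add: X_def algebra_simps)
  have a2: "y1 - X = (1-t) * (y1 - y0)" by (simp add: X_def algebra_simps)
  have p1: "0 \<le> t * (y1 - y0)" using t y by auto
  have p2: "0 \<le> (1-t) * (y1 - y0)" using t y by auto
  have "0 \<le> X - y0" using p1 unfolding a1 .
  moreover have "0 \<le> y1 - X" using p2 unfolding a2 .
  ultimately have "y0 \<le> X" "X \<le> y1" by simp_all
  then have X: "X \<in> {y0..y1}" by simp
  have y0: "y0 \<in> {y0..y1}" and y1: "y1 \<in> {y0..y1}" using y by auto
  have e1: "\<bar>F X - F y0\<bar> \<le> \<kappa> * (t * (y1 - y0))"
    using lip[OF X y0] a1 t y by (simp add: abs_mult)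
  have e2: "\<bar>F X - F y1\<bar> \<le> \<kappa> * ((1-t) * (y1 - y0))"
  proof -
    have "\<bar>X - y1\<bar> = \<bar>y1 - X\<bar>" by (rule abs_minus_commute)
    also have "\<dots> = (1-t) * (y1 - y0)" using a2 p2 by simp
    finally show ?thesis using lip[OF X y1] by simp
  qed
  have eq: "F X - ((1-t) * F y0 + t * F y1) = (1-t) * (F X - F y0) + t * (F X - F y1)"
    by (simp add: algebra_simps)
  have "\<bar>(1-t) * (F X - F y0) + t * (F X - F y1)\<bar> \<le> (1-t) * \<bar>F X - F y0\<bar> + t * \<bar>F X - F y1\<bar>"
    using t by (simp add: abs_triangle_ineq[THEN order_trans] abs_mult)
  also have "\<dots> \<le> (1-t) * (\<kappa> * (t * (y1 - y0))) + t * (\<kappa> * ((1-t) * (y1 - y0)))"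
    using t by (intro add_mono mult_left_mono e1 e2) auto
  also have "\<dots> \<le> (1-t) * (\<kappa> * (y1 - y0)) + t * (\<kappa> * (y1 - y0))"
    using t y k by (intro add_mono mult_left_mono) (auto simp: mult_left_le_one_le mult_right_le_one_le)
  also have "\<dots> = \<kappa> * (y1 - y0)" by (simp add: algebra_simps)
  finally show ?thesis using eq X_def by simp
qed



context mesh begin

lemma main:
  fixes a b :: real and x D v and \<kappa> :: real
  assumes ab: "a < b" and xi0: "xi 0 = 0" and x0: "x 0 = a" and xK: "x K = b"
    and xm: "\<forall>k<K. x k < x (Suc k)"
    and Dd: "\<forall>n. \<forall>y\<in>{a..b}. (D n has_real_derivative D (Suc n) y) (at y within {a..b})"
    and Da: "D 1 a = 0" and Db: "D 1 b = 0" and kap: "0 < \<kappa>"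
    and bnd: "\<forall>y\<in>{a..b}. \<bar>D 1 y\<bar> \<le> \<kappa> \<and> \<bar>D 2 y\<bar> \<le> \<kappa> \<and> \<bar>D 3 y\<bar> \<le> \<kappa>"
    and Wv: "\<forall>i\<in>{1..K - 1}. (\<Sum>j = 1..K - 1. Wmat xi i j * v j) = gradA K xi (D 1) x i"
  shows "Wquad K xi (\<lambda>i. v i - D 1 (x i)) \<le> \<kappa>\<^sup>2 * xi K * (max_gap K x)\<^sup>2"
proof -
  define r where "r i = D 1 (x i)" for i
  define nu where "nu i = (if i \<in> {1..K-1} then v i - r i else 0)" for i
  define f where "f s = D 1 (Xmap K xi x s)" for s
  define g where "g = Xmap K xi nu"
  define Ir where "Ir = Xmap K xi r"
  define gap where "gap = max_gap K x"
  define S where "S = {xi 0..xi K}"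
  have r0: "r 0 = 0" "r K = 0" using Da Db x0 xK by (auto simp: r_def)
  have nu0: "nu 0 = 0" "nu K = 0" using K1 by (auto simp: nu_def)
  have xrange: "x k \<in> {a..b}" if "k \<le> K" for k
    using chain_le[OF xm, of 0 k] chain_le[OF xm, of k K] that x0 xK by auto
  have d2: "\<forall>y\<in>{a..b}. (D 1 has_real_derivative D 2 y) (at y within {a..b})"
    using Dd by (metis Suc_1)
  have D1cont: "continuous_on {a..b} (D 1)"
    using d2 by (intro DERIV_continuous_on) auto
  have lip: "\<bar>D 1 y - D 1 z\<bar> \<le> \<kappa> * \<bar>y - z\<bar>" if "y \<in> {a..b}" "z \<in> {a..b}" for y z
    using field_differentiable_bound[of "{a..b}" "D 1" "D 2" \<kappa> y z] d2 bnd that by auto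
  have gapk: "x k - x (k-1) \<le> gap" if "k \<in> {1..K}" for k
    unfolding gap_def max_gap_def using that by (intro Max_ge) auto
  have loc: "\<exists>k\<in>{1..K}. \<exists>t. 0 \<le> t \<and> t \<le> 1 \<and> (\<forall>c. Xmap K xi c s = (1-t) * c (k-1) + t * c k)"
    if "s \<in> S" for s
  proof -
    obtain k where k: "k\<in>{1..K}" "xi (k-1) \<le> s" "s \<le> xi k" using cover \<open>s \<in> S\<close> S_def by blast
    have lt: "xi (k-1) < xi k" using k by (intro xl) auto
    define t where "t = (s - xi (k-1)) / (xi k - xi (k-1))"
    have u: "(xi k - s) / (xi k - xi (k-1)) = 1 - t" using lt by (simp add: t_def field_simps)
    have "\<forall>c. Xmap K xi c s = (1-t) * c (k-1) + t * c k"
    proof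
      fix c
      have "Xmap K xi c s = c (k-1) * ((xi k - s) / (xi k - xi (k-1))) + c k * t"
        using local_rep[OF k, of c] unfolding t_def .
      then show "Xmap K xi c s = (1-t) * c (k-1) + t * c k" unfolding u by (simp add: algebra_simps)
    qed
    moreover have "0 \<le> t" "t \<le> 1" using k lt by (auto simp: t_def field_simps)
    ultimately show ?thesis using k by blast
  qed
  have Xrange: "Xmap K xi x s \<in> {a..b}" if sS: "s \<in> S" for s
  proof -
    obtain k t where k: "k\<in>{1..K}" "0 \<le> t" "t \<le> 1" and e: "Xmap K xi x s = (1-t) * x (k-1) + t * x k"
      using loc[OF sS] by blast
    have p: "a \<le> x (k-1)" "x (k-1) \<le> b" "a \<le> x k" "x k \<le> b" using k xrange by auto
    have "(1-t)*a \<le> (1-t) * x (k-1)" "t * a \<le> t * x k" "(1-t) * x (k-1) \<le> (1-t)*b" "t * x k \<le> t * b"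
      using p k by (auto intro!: mult_left_mono)
    then have "(1-t)*a + t*a \<le> (1-t) * x (k-1) + t * x k" "(1-t) * x (k-1) + t * x k \<le> (1-t)*b + t*b"
      by linarith+
    then show ?thesis unfolding e by (simp add: algebra_simps)
  qed
  have pieceS: "{xi (k-1)..xi k} \<subseteq> S" if "k \<in> {1..K}" for k
    using that xle[of 0 "k-1"] xle[of k K] by (auto simp: S_def)
  have cf: "continuous_on {xi (k-1)..xi k} f" if "k \<in> {1..K}" for k
    unfolding f_def
    by (rule continuous_on_compose2[OF D1cont cont_Xmap[OF that]]) (use Xrange pieceS[OF that] in auto)
  have cX: "continuous_on {xi (k-1)..xi k} (Xmap K xi c)" if "k \<in> {1..K}" for k c
    by (rule cont_Xmap[OF that])
  define ej where "ej j = (\<lambda>i::nat. if i = j then (1::real) else 0)" for j :: nat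
  have fhat: "((\<lambda>s. f s * hat K xi j s) has_integral gradA K xi (D 1) x j) S" if "j \<le> K" for j
  proof -
    have "(\<lambda>s. f s * Xmap K xi (ej j) s) integrable_on S"
      unfolding S_def by (rule pieces_integrable) (intro continuous_on_mult cf cX; assumption)
    moreover have "(\<lambda>s. f s * Xmap K xi (ej j) s) = (\<lambda>s. f s * hat K xi j s)"
      using hat_Xmap[OF that] by (simp add: ej_def)
    ultimately have "((\<lambda>s. f s * hat K xi j s) has_integral integral S (\<lambda>s. f s * hat K xi j s)) S"
      by (metis integrable_integral)
    then show ?thesis unfolding gradA_def S_def xi0 f_def .
  qed
  define QF where "QF = (\<Sum>i = 1..K - 1. nu i * gradA K xi (D 1) x i)"
  have Hfg: "((\<lambda>s. f s * g s) has_integral QF) S"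
  proof -
    have "((\<lambda>s. \<Sum>i\<in>{0..K}. nu i * (f s * hat K xi i s)) has_integral (\<Sum>i\<in>{0..K}. nu i * gradA K xi (D 1) x i)) S"
      by (intro has_integral_sum has_integral_mult_right fhat) auto
    moreover have "(\<lambda>s. \<Sum>i\<in>{0..K}. nu i * (f s * hat K xi i s)) = (\<lambda>s. f s * g s)"
      by (auto simp: g_def Xmap_def sum_distrib_left algebra_simps)
    moreover have "(\<Sum>i\<in>{0..K}. nu i * gradA K xi (D 1) x i) = QF"
      unfolding QF_def by (rule sum.mono_neutral_right) (auto simp: nu_def)
    ultimately show ?thesis by simp
  qed
  define Qn where "Qn = (\<Sum>i = 1..K - 1. \<Sum>j = 1..K - 1. nu i * Wmat xi i j * nu j)"
  define QI where "QI = (\<Sum>i = 1..K - 1. \<Sum>j = 1..K - 1. nu i * Wmat xi i j * r j)"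
  have hQ1: "Wquad K xi (\<lambda>i. v i - D 1 (x i)) = Qn"
    unfolding Wquad_def Qn_def by (intro sum.cong refl) (auto simp: nu_def r_def)
  have Hgg: "((\<lambda>s. g s * g s) has_integral Qn) S"
    using T_integral[of nu nu] unfolding Qn_def W_bilin[OF K1 nu0 nu0] S_def g_def .
  have HgI: "((\<lambda>s. g s * Ir s) has_integral QI) S"
    using T_integral[of nu r] unfolding QI_def W_bilin[OF K1 nu0 r0] S_def g_def Ir_def .
  have Qdec: "Qn = QF - QI"
  proof -
    have "Qn = (\<Sum>i = 1..K - 1. nu i * gradA K xi (D 1) x i - (\<Sum>j = 1..K - 1. nu i * Wmat xi i j * r j))"
      unfolding Qn_def
    proof (rule sum.cong[OF refl])
      fix i assume i: "i \<in> {1..K-1}"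
      have "(\<Sum>j = 1..K - 1. nu i * Wmat xi i j * nu j) = (\<Sum>j = 1..K - 1. nu i * Wmat xi i j * v j - nu i * Wmat xi i j * r j)"
        by (rule sum.cong[OF refl]) (auto simp: nu_def algebra_simps)
      also have "\<dots> = nu i * (\<Sum>j = 1..K - 1. Wmat xi i j * v j) - (\<Sum>j = 1..K - 1. nu i * Wmat xi i j * r j)"
        by (simp add: sum_subtractf sum_distrib_left mult.assoc)
      also have "\<dots> = nu i * gradA K xi (D 1) x i - (\<Sum>j = 1..K - 1. nu i * Wmat xi i j * r j)"
        using Wv i by simp
      finally show "(\<Sum>j = 1..K - 1. nu i * Wmat xi i j * nu j) = \<dots>" .
    qed
    then show ?thesis unfolding QF_def QI_def by (simp add: sum_subtractf)
  qed
  have eint: "(\<lambda>s. (f s - Ir s)^2) integrable_on S"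
    unfolding S_def Ir_def by (rule pieces_integrable) (intro continuous_on_power continuous_on_diff cf cX; assumption)
  define E where "E = integral S (\<lambda>s. (f s - Ir s)^2)"
  have HE: "((\<lambda>s. (f s - Ir s)^2) has_integral E) S" using eint unfolding E_def by (rule integrable_integral)
  have comb: "((\<lambda>s. g s * g s - 2 * (f s * g s) + 2 * (g s * Ir s) + (f s - Ir s)^2) has_integral
      (Qn - 2 * QF + 2 * QI + E)) S"
    by (intro has_integral_add has_integral_diff has_integral_mult_right Hgg Hfg HgI HE)
  have "0 \<le> Qn - 2 * QF + 2 * QI + E"
  proof (rule has_integral_nonneg[OF comb])
    fix s
    have "g s * g s - 2 * (f s * g s) + 2 * (g s * Ir s) + (f s - Ir s)^2 = (g s - (f s - Ir s))^2"
      by (simp add: power2_eq_square algebra_simps)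
    then show "0 \<le> g s * g s - 2 * (f s * g s) + 2 * (g s * Ir s) + (f s - Ir s)^2" by simp
  qed
  then have QE: "Qn \<le> E" using Qdec by simp
  have pw: "(f s - Ir s)^2 \<le> (\<kappa> * gap)^2" if sS: "s \<in> S" for s
  proof -
    obtain k t where k: "k\<in>{1..K}" "0 \<le> t" "t \<le> 1" and e: "\<forall>c. Xmap K xi c s = (1-t) * c (k-1) + t * c k"
      using loc[OF sS] by blast
    have xk: "x (k-1) \<in> {a..b}" "x k \<in> {a..b}" "x (k-1) \<le> x k" using k xrange chain_le[OF xm, of "k-1" k] by auto
    have lip': "\<bar>D 1 y - D 1 z\<bar> \<le> \<kappa> * \<bar>y - z\<bar>" if "y \<in> {x (k-1)..x k}" "z \<in> {x (k-1)..x k}" for y z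
      using lip that xk by auto
    have "\<bar>D 1 ((1-t) * x (k-1) + t * x k) - ((1-t) * D 1 (x (k-1)) + t * D 1 (x k))\<bar> \<le> \<kappa> * (x k - x (k-1))"
      by (rule interp_bound[OF lip' xk(3) k(2,3)]) (use kap in auto)
    also have "\<dots> \<le> \<kappa> * gap" using gapk[OF k(1)] kap by simp
    finally have "\<bar>f s - Ir s\<bar> \<le> \<kappa> * gap"
      using e unfolding f_def Ir_def r_def by simp
    then have "\<bar>f s - Ir s\<bar>^2 \<le> (\<kappa> * gap)^2" by (intro power_mono) auto
    then show ?thesis by simp
  qed
  have c: "((\<lambda>s. (\<kappa>*gap)^2) has_integral (xi K * (\<kappa>*gap)^2)) S"
    using has_integral_const_real[of "(\<kappa>*gap)^2" "xi 0" "xi K"] xle[of 0 K] xi0 by (simp add: S_def)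
  have "E \<le> xi K * (\<kappa> * gap)^2"
    by (rule has_integral_le[OF HE c pw])
  moreover have "xi K * (\<kappa> * gap)^2 = \<kappa>\<^sup>2 * xi K * (max_gap K x)\<^sup>2"
    by (simp add: gap_def power_mult_distrib)
  ultimately show ?thesis using hQ1 QE by linarith
qed

end

lemma ratio_ge1:
  assumes K1: "1 \<le> K" and mono: "\<forall>k<K. xi k < xi (Suc k)"
  shows "1 \<le> mesh_ratio K xi"
proof -
  let ?S = "mesh_delta xi ` {1..K}"
  have fin: "finite ?S" and ne: "?S \<noteq> {}" using K1 by auto
  have pos: "\<forall>y\<in>?S. 0 < y"
  proof
    fix y assume "y \<in> ?S"
    then obtain k where k: "k \<in> {1..K}" "y = mesh_delta xi k" by blast
    then have "k - 1 < K" "Suc (k - 1) = k" by auto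
    then have "xi (k-1) < xi (Suc (k-1))" using mono by blast
    then have "xi (k-1) < xi k" using \<open>Suc (k - 1) = k\<close> by simp
    then show "0 < y" using k by (simp add: mesh_delta_def)
  qed
  have "Min ?S \<in> ?S" using fin ne by (rule Min_in)
  then have mp: "0 < Min ?S" using pos by blast
  have "mesh_delta xi 1 \<in> ?S" using K1 by auto
  then have m1: "Min ?S \<le> mesh_delta xi 1" "mesh_delta xi 1 \<le> Max ?S"
    using fin by (auto intro: Min_le Max_ge)
  then have "Min ?S \<le> Max ?S" by linarith
  then show ?thesis unfolding mesh_ratio_def using mp by simp
qed

theorem lemma27:
  shows "\<exists>C::real. \<forall>(a::real) (b::real) (M::real) (K::nat) (xi::nat \<Rightarrow> real)
      (x::nat \<Rightarrow> real) (D::nat \<Rightarrow> real \<Rightarrow> real) (\<kappa>::real) (v::nat \<Rightarrow> real).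
      a < b \<longrightarrow> 0 < M \<longrightarrow> 1 \<le> K \<longrightarrow>
      xi 0 = 0 \<longrightarrow> xi K = M \<longrightarrow> (\<forall>k<K. xi k < xi (Suc k)) \<longrightarrow>
      x 0 = a \<longrightarrow> x K = b \<longrightarrow> (\<forall>k<K. x k < x (Suc k)) \<longrightarrow>
      (\<forall>n. \<forall>y\<in>{a..b}. (D n has_real_derivative D (Suc n) y) (at y within {a..b})) \<longrightarrow>
      D 1 a = 0 \<longrightarrow> D 1 b = 0 \<longrightarrow>
      0 < \<kappa> \<longrightarrow>
      (\<forall>y\<in>{a..b}. \<bar>D 1 y\<bar> \<le> \<kappa> \<and> \<bar>D 2 y\<bar> \<le> \<kappa> \<and> \<bar>D 3 y\<bar> \<le> \<kappa>) \<longrightarrow>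
      (\<forall>i\<in>{1..K - 1}. (\<Sum>j = 1..K - 1. Wmat xi i j * v j) = gradA K xi (D 1) x i) \<longrightarrow>
      Wquad K xi (\<lambda>i. v i - D 1 (x i))
        \<le> C * \<kappa>\<^sup>2 * mesh_ratio K xi * M * (max_gap K x)\<^sup>2"
proof (intro exI[of _ 1] allI impI)
  fix a b M :: real and K :: nat and xi x :: "nat \<Rightarrow> real" and D :: "nat \<Rightarrow> real \<Rightarrow> real"
    and \<kappa> :: real and v :: "nat \<Rightarrow> real"
  assume ab: "a < b" and M: "0 < M" and K1: "1 \<le> K" and xi0: "xi 0 = 0" and xiK: "xi K = M"
    and mono: "\<forall>k<K. xi k < xi (Suc k)" and x0: "x 0 = a" and xK: "x K = b"
    and xm: "\<forall>k<K. x k < x (Suc k)"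
    and Dd: "\<forall>n. \<forall>y\<in>{a..b}. (D n has_real_derivative D (Suc n) y) (at y within {a..b})"
    and Da: "D 1 a = 0" and Db: "D 1 b = 0" and kap: "0 < \<kappa>"
    and bnd: "\<forall>y\<in>{a..b}. \<bar>D 1 y\<bar> \<le> \<kappa> \<and> \<bar>D 2 y\<bar> \<le> \<kappa> \<and> \<bar>D 3 y\<bar> \<le> \<kappa>"
    and Wv: "\<forall>i\<in>{1..K - 1}. (\<Sum>j = 1..K - 1. Wmat xi i j * v j) = gradA K xi (D 1) x i"
  interpret mesh K xi using K1 mono by unfold_locales
  have Q: "Wquad K xi (\<lambda>i. v i - D 1 (x i)) \<le> \<kappa>\<^sup>2 * xi K * (max_gap K x)\<^sup>2"
    by (rule main[OF ab xi0 x0 xK xm Dd Da Db kap bnd Wv])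
  have r: "1 \<le> mesh_ratio K xi" by (rule ratio_ge1[OF K1 mono])
  have nn: "0 \<le> \<kappa>\<^sup>2 * M * (max_gap K x)\<^sup>2" using M by simp
  have "1 * (\<kappa>\<^sup>2 * M * (max_gap K x)\<^sup>2) \<le> mesh_ratio K xi * (\<kappa>\<^sup>2 * M * (max_gap K x)\<^sup>2)"
    by (rule mult_right_mono[OF r nn])
  moreover have "mesh_ratio K xi * (\<kappa>\<^sup>2 * M * (max_gap K x)\<^sup>2) = 1 * \<kappa>\<^sup>2 * mesh_ratio K xi * M * (max_gap K x)\<^sup>2"
    by (simp only: mult_ac)
  moreover have "\<kappa>\<^sup>2 * xi K * (max_gap K x)\<^sup>2 = 1 * (\<kappa>\<^sup>2 * M * (max_gap K x)\<^sup>2)"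
    using xiK by simp
  ultimately show "Wquad K xi (\<lambda>i. v i - D 1 (x i)) \<le> 1 * \<kappa>\<^sup>2 * mesh_ratio K xi * M * (max_gap K x)\<^sup>2"
    using Q by linarith
qed

end
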